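(* Let $\mathscr{H}=\mathscr{H}_L\oplus\mathscr{H}_C\oplus\mathscr{H}_R$ be an orthogonal decomposition of a Hilbert space, and let $U$ be a unitary operator on $\mathscr{H}$ of the form $U=(U_{LC}\oplus\mathbb{1}_{\mathscr{H}_R})(\mathbb{1}_{\mathscr{H}_L}\oplus U_{CR})$, where $U_{LC}$ is unitary on $\mathscr{H}_{LC}=\mathscr{H}_L\oplus\mathscr{H}_C$ and $U_{CR}$ is unitary on $\mathscr{H}_{CR}=\mathscr{H}_C\oplus\mathscr{H}_R$. Let $V=V_L\oplus\mathscr{H}_C\oplus V_R$ where $V_L\subset\mathscr{H}_L$ and $V_R\subset\mathscr{H}_R$ are closed subspaces, and put $V_{LC}=V_L\oplus\mathscr{H}_C$, $V_{CR}=\mathscr{H}_C\oplus V_R$. Then the $U$-Schur function $f_V$ of $V$ factorizes as $$f_V=(\mathbb{1}_{V_L}\oplus f^R_{V_{CR}})(f^L_{V_{LC}}\oplus\mathbb{1}_{V_R}),$$ where $f^L_{V_{LC}}$ is the $U_{LC}$-Schur function of $V_{LC}$ and $f^R_{V_{CR}}$ is the $U_{CR}$-Schur function of $V_{CR}$. In particular, the $U$-Schur function of $\mathscr{H}_C$ satisfies $f_{\mathscr{H}_C}=f^R_{\mathscr{H}_C}f^L_{\mathscr{H}_C}$.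
   Context: For a unitary operator $W$ on a Hilbert space $\mathscr{K}$ and a closed subspace $S\subset\mathscr{K}$ with orthogonal projection $P$, the $W$-Carathéodory function of $S$ is $F_S(z)=P(W+z\mathbb{1})(W-z\mathbb{1})^{-1}P$ restricted to $S$ ($z$ in the open unit disk $\mathbb{D}$), and the $W$-Schur function of $S$ is the analytic function on $\mathbb{D}$ with values in operators on $S$ given by $f_S(z)=z^{-1}(F_S(z)-\mathbb{1}_S)(F_S(z)+\mathbb{1}_S)^{-1}$ (equivalently, $f_S(z)=P(W-z(\mathbb{1}-P))^{-1}P$ restricted to $S$). All functions in the factorization are regarded as operators on $V$, with direct sums taken with respect to $V=V_L\oplus V_{CR}=V_{LC}\oplus V_R$; $\mathbb{1}_X$ is the identity on $X$. *)

theory Defs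
  imports "HOL-Analysis.Analysis"
begin

text \<open>A complex Hilbert space: a Banach space (over the reals, from the type class) carrying
  a complex scalar multiplication sc (extending the real one) and a complex inner
  product ip (linear in the second argument) inducing the norm.\<close>

definition complex_hilbert ::
  "(complex \<Rightarrow> 'a::{real_normed_vector,banach} \<Rightarrow> 'a) \<Rightarrow> ('a \<Rightarrow> 'a \<Rightarrow> complex) \<Rightarrow> bool" where
  "complex_hilbert sc ip \<longleftrightarrow>
     (\<forall>x. sc 1 x = x) \<and>
     (\<forall>a b x. sc (a * b) x = sc a (sc b x)) \<and>
     (\<forall>a b x. sc (a + b) x = sc a x + sc b x) \<and>
     (\<forall>a x y. sc a (x + y) = sc a x + sc a y) \<and>
     (\<forall>r x. sc (complex_of_real r) x = r *\<^sub>R x) \<and>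
     (\<forall>x y z. ip x (y + z) = ip x y + ip x z) \<and>
     (\<forall>x y c. ip x (sc c y) = c * ip x y) \<and>
     (\<forall>x y. ip y x = cnj (ip x y)) \<and>
     (\<forall>x. (norm x)\<^sup>2 = Re (ip x x))"

definition csubspace_of :: "(complex \<Rightarrow> 'a::real_vector \<Rightarrow> 'a) \<Rightarrow> 'a set \<Rightarrow> bool" where
  "csubspace_of sc S \<longleftrightarrow> 0 \<in> S \<and> (\<forall>x\<in>S. \<forall>y\<in>S. x + y \<in> S) \<and> (\<forall>c. \<forall>x\<in>S. sc c x \<in> S)"

definition closed_csubspace :: "(complex \<Rightarrow> 'a::real_normed_vector \<Rightarrow> 'a) \<Rightarrow> 'a set \<Rightarrow> bool" where
  "closed_csubspace sc S \<longleftrightarrow> csubspace_of sc S \<and> closed S"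

definition orth :: "('a \<Rightarrow> 'a \<Rightarrow> complex) \<Rightarrow> 'a set \<Rightarrow> 'a set \<Rightarrow> bool" where
  "orth ip A B \<longleftrightarrow> (\<forall>a\<in>A. \<forall>b\<in>B. ip a b = 0)"

definition ssum :: "'a::plus set \<Rightarrow> 'a set \<Rightarrow> 'a set" where
  "ssum A B = {a + b | a b. a \<in> A \<and> b \<in> B}"

definition proj :: "('a::ab_group_add \<Rightarrow> 'a \<Rightarrow> complex) \<Rightarrow> 'a set \<Rightarrow> 'a \<Rightarrow> 'a" where
  "proj ip S x = (THE p. p \<in> S \<and> (\<forall>s\<in>S. ip s (x - p) = 0))"

text \<open>W is a unitary operator on the closed subspace K (values outside K irrelevant).\<close>
definition unitary_on ::
  "(complex \<Rightarrow> 'a::real_vector \<Rightarrow> 'a) \<Rightarrow> ('a \<Rightarrow> 'a \<Rightarrow> complex) \<Rightarrow> 'a set \<Rightarrow> ('a \<Rightarrow> 'a) \<Rightarrow> bool" where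
  "unitary_on sc ip K W \<longleftrightarrow>
     (\<forall>x\<in>K. W x \<in> K) \<and> (\<forall>y\<in>K. \<exists>x\<in>K. W x = y) \<and>
     (\<forall>x\<in>K. \<forall>y\<in>K. W (x + y) = W x + W y) \<and>
     (\<forall>c. \<forall>x\<in>K. W (sc c x) = sc c (W x)) \<and>
     (\<forall>x\<in>K. \<forall>y\<in>K. ip (W x) (W y) = ip x y)"

text \<open>The W-Schur function of the closed subspace S of K, for W unitary on K:
  f_S(z) = P (W - z(1 - P))^{-1} P restricted to S, P the orthogonal projection onto S.
  Here (W - z(1-P))^{-1} x is the unique y in K with W y - z (y - P y) = x.\<close>
definition schur ::
  "(complex \<Rightarrow> 'a::real_vector \<Rightarrow> 'a) \<Rightarrow> ('a \<Rightarrow> 'a \<Rightarrow> complex) \<Rightarrow> ('a \<Rightarrow> 'a) \<Rightarrow> 'a set \<Rightarrow> 'a set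
     \<Rightarrow> complex \<Rightarrow> 'a \<Rightarrow> 'a" where
  "schur sc ip W K S z x =
     proj ip S (THE y. y \<in> K \<and> W y - sc z (y - proj ip S y) = x)"

end

theory Submission
  imports Defs
begin



locale CH =
  fixes sc :: "complex \<Rightarrow> 'a::{real_normed_vector,banach} \<Rightarrow> 'a"
    and ip :: "'a \<Rightarrow> 'a \<Rightarrow> complex"
  assumes hilb: "complex_hilbert sc ip"
begin

lemma sc_one: "sc 1 x = x"
  using hilb unfolding complex_hilbert_def by metis
lemma sc_mult: "sc (a*b) x = sc a (sc b x)"
  using hilb unfolding complex_hilbert_def by blast
lemma sc_addl: "sc (a+b) x = sc a x + sc b x"
  using hilb unfolding complex_hilbert_def by blast
lemma sc_addr: "sc a (x+y) = sc a x + sc a y"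
  using hilb unfolding complex_hilbert_def by blast
lemma sc_real: "sc (complex_of_real r) x = r *\<^sub>R x"
  using hilb unfolding complex_hilbert_def by blast
lemma ip_addr: "ip x (y+w) = ip x y + ip x w"
  using hilb unfolding complex_hilbert_def by blast
lemma ip_scr: "ip x (sc c y) = c * ip x y"
  using hilb unfolding complex_hilbert_def by blast
lemma ip_cnj: "ip y x = cnj (ip x y)"
  using hilb unfolding complex_hilbert_def by blast
lemma norm_ip: "(norm x)\<^sup>2 = Re (ip x x)"
  using hilb unfolding complex_hilbert_def by blast

lemma sc_zero_left[simp]: "sc 0 x = 0"
  using sc_real[of 0 x] by simp
lemma sc_zero_right[simp]: "sc a 0 = 0"
  using sc_addr[of a 0 0] by simp
lemma sc_minus_right: "sc a (-x) = - sc a x"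
  using sc_addr[of a x "-x"] by (simp add: add_eq_0_iff)
lemma sc_diff_right: "sc a (x - y) = sc a x - sc a y"
  using sc_addr[of a x "-y"] sc_minus_right[of a y] by simp
lemma sc_neg1: "sc (-1) x = - x"
  using sc_real[of "-1" x] by simp
lemma ip_zero_right[simp]: "ip x 0 = 0"
  using ip_addr[of x 0 0] by simp
lemma ip_minus_right: "ip x (-y) = - ip x y"
  using ip_addr[of x y "-y"] by (simp add: add_eq_0_iff)
lemma ip_diff_right: "ip x (y - w) = ip x y - ip x w"
  using ip_addr[of x y "-w"] ip_minus_right[of x w] by simp
lemma ip_addl: "ip (x+y) w = ip x w + ip y w"
proof -
  have "ip (x+y) w = cnj (ip w (x+y))" by (rule ip_cnj)
  also have "... = cnj (ip w x) + cnj (ip w y)" by (simp add: ip_addr)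
  also have "... = ip x w + ip y w" by (simp add: ip_cnj[of x w, symmetric] ip_cnj[of y w, symmetric])
  finally show ?thesis .
qed
lemma ip_zero_left[simp]: "ip 0 x = 0"
  using ip_cnj[of x 0] by simp
lemma ip_minus_left: "ip (-x) y = - ip x y"
  using ip_addl[of x "-x" y] by (simp add: add_eq_0_iff)
lemma ip_diff_left: "ip (x - y) w = ip x w - ip y w"
  using ip_addl[of x "-y" w] ip_minus_left[of y w] by simp
lemma ip_scl: "ip (sc c x) y = cnj c * ip x y"
proof -
  have "ip (sc c x) y = cnj (ip y (sc c x))" by (rule ip_cnj)
  also have "... = cnj c * cnj (ip y x)" by (simp add: ip_scr)
  also have "... = cnj c * ip x y" by (simp add: ip_cnj[of x y, symmetric])
  finally show ?thesis .
qed
lemma ip_scaleR_r: "ip x (r *\<^sub>R y) = complex_of_real r * ip x y"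
  using ip_scr[of x "complex_of_real r" y] by (simp add: sc_real)
lemma ip_scaleR_l: "ip (r *\<^sub>R x) y = complex_of_real r * ip x y"
  using ip_scl[of "complex_of_real r" x y] by (simp add: sc_real)
lemma ip_self: "ip x x = complex_of_real ((norm x)\<^sup>2)"
proof -
  have "Im (ip x x) = - Im (ip x x)" using arg_cong[OF ip_cnj[of x x], of Im] by simp
  then have "Im (ip x x) = 0" by simp
  then show ?thesis using norm_ip[of x] by (simp add: complex_eq_iff)
qed
lemma ip_self_zero: "ip x x = 0 \<longleftrightarrow> x = 0"
  by (simp add: ip_self)
lemma ip_orth_sym: "ip x y = 0 \<Longrightarrow> ip y x = 0"
  using ip_cnj[of x y] by simp
lemma pyth: "ip x y = 0 \<Longrightarrow> (norm (x+y))\<^sup>2 = (norm x)\<^sup>2 + (norm y)\<^sup>2"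
proof -
  assume h: "ip x y = 0"
  have "ip (x+y) (x+y) = ip x x + ip y y"
    using h ip_orth_sym[OF h] by (simp add: ip_addl ip_addr)
  then have "complex_of_real ((norm (x+y))\<^sup>2) = complex_of_real ((norm x)\<^sup>2 + (norm y)\<^sup>2)"
    by (simp add: ip_self)
  then show ?thesis using of_real_eq_iff by blast
qed
lemma norm_sc: "norm (sc c x) = cmod c * norm x"
proof -
  have "ip (sc c x) (sc c x) = (c * cnj c) * ip x x" by (simp add: ip_scl ip_scr mult_ac)
  also have "... = complex_of_real ((cmod c * norm x)\<^sup>2)"
    by (simp add: complex_norm_square[symmetric] ip_self power_mult_distrib)
  finally have "complex_of_real ((norm (sc c x))\<^sup>2) = complex_of_real ((cmod c * norm x)\<^sup>2)"
    by (simp add: ip_self)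
  then have "(norm (sc c x))\<^sup>2 = (cmod c * norm x)\<^sup>2" using of_real_eq_iff by blast
  then show ?thesis by (simp add: power2_eq_imp_eq)
qed
lemma parallelogram: fixes x y :: 'a shows "(norm (x+y))\<^sup>2 + (norm (x-y))\<^sup>2 = 2*(norm x)\<^sup>2 + 2*(norm y)\<^sup>2"
proof -
  have "ip (x+y) (x+y) + ip (x-y) (x-y) = 2 * ip x x + 2 * ip y y"
    by (simp add: ip_addl ip_addr ip_diff_left ip_diff_right)
  then have "complex_of_real ((norm (x+y))\<^sup>2 + (norm (x-y))\<^sup>2) = complex_of_real (2*(norm x)\<^sup>2 + 2*(norm y)\<^sup>2)"
    by (simp add: ip_self)
  then show ?thesis using of_real_eq_iff by blast
qed
end


context CH begin

abbreviation "cs S \<equiv> csubspace_of sc S"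

lemma cs_0: "cs S \<Longrightarrow> 0 \<in> S" and cs_add: "cs S \<Longrightarrow> x \<in> S \<Longrightarrow> y \<in> S \<Longrightarrow> x + y \<in> S"
  and cs_sc: "cs S \<Longrightarrow> x \<in> S \<Longrightarrow> sc c x \<in> S"
  unfolding csubspace_of_def by auto
lemma cs_minus: "cs S \<Longrightarrow> x \<in> S \<Longrightarrow> - x \<in> S"
  using cs_sc[of S x "-1"] sc_neg1 by simp
lemma cs_diff: "cs S \<Longrightarrow> x \<in> S \<Longrightarrow> y \<in> S \<Longrightarrow> x - y \<in> S"
  using cs_add[of S x "-y"] cs_minus[of S y] by simp
lemma cs_scaleR: "cs S \<Longrightarrow> x \<in> S \<Longrightarrow> r *\<^sub>R x \<in> S"
  using cs_sc[of S x "complex_of_real r"] sc_real by simp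

definition "hasproj S \<longleftrightarrow> cs S \<and> (\<forall>x. \<exists>p\<in>S. \<forall>s\<in>S. ip s (x - p) = 0)"

lemma proj_unique:
  assumes "cs S" "p \<in> S" "\<forall>s\<in>S. ip s (x - p) = 0"
  shows "proj ip S x = p"
  unfolding proj_def
proof (rule the_equality)
  show "p \<in> S \<and> (\<forall>s\<in>S. ip s (x - p) = 0)" using assms by auto
next
  fix q assume q: "q \<in> S \<and> (\<forall>s\<in>S. ip s (x - q) = 0)"
  have d: "p - q \<in> S" using cs_diff assms q by auto
  have "ip (p - q) (x - q) - ip (p - q) (x - p) = 0" using d q assms by simp
  then have "ip (p - q) (p - q) = 0" by (simp add: ip_diff_right)
  then show "q = p" by (simp add: ip_self_zero)
qed

lemma hasproj_cs: "hasproj S \<Longrightarrow> cs S" unfolding hasproj_def by auto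

lemma proj_prop:
  assumes "hasproj S" shows "proj ip S x \<in> S" "\<forall>s\<in>S. ip s (x - proj ip S x) = 0"
proof -
  obtain p where p: "p \<in> S" "\<forall>s\<in>S. ip s (x - p) = 0" using assms unfolding hasproj_def by blast
  have "proj ip S x = p" using proj_unique[OF hasproj_cs[OF assms] p] .
  then show "proj ip S x \<in> S" "\<forall>s\<in>S. ip s (x - proj ip S x) = 0" using p by auto
qed

lemma proj_in: "hasproj S \<Longrightarrow> proj ip S x \<in> S" using proj_prop by blast

lemma proj_id: "cs S \<Longrightarrow> s \<in> S \<Longrightarrow> proj ip S s = s"
  by (rule proj_unique) auto

lemma proj_zero: "cs S \<Longrightarrow> \<forall>s\<in>S. ip s x = 0 \<Longrightarrow> proj ip S x = 0"
  by (rule proj_unique) (auto intro: cs_0)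

lemma proj_orth0: "hasproj A \<Longrightarrow> orth ip A B \<Longrightarrow> b \<in> B \<Longrightarrow> proj ip A b = 0"
  by (rule proj_zero) (auto simp: orth_def hasproj_cs)

lemma proj_add: assumes "hasproj S" shows "proj ip S (x + y) = proj ip S x + proj ip S y"
proof (rule proj_unique)
  show "cs S" using assms hasproj_cs by auto
  show "proj ip S x + proj ip S y \<in> S" using proj_in[OF assms] cs_add hasproj_cs[OF assms] by auto
  show "\<forall>s\<in>S. ip s (x + y - (proj ip S x + proj ip S y)) = 0"
  proof
    fix s assume "s \<in> S"
    then have "ip s (x - proj ip S x) = 0" "ip s (y - proj ip S y) = 0" using proj_prop[OF assms] by auto
    moreover have "x + y - (proj ip S x + proj ip S y) = (x - proj ip S x) + (y - proj ip S y)" by simp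
    ultimately show "ip s (x + y - (proj ip S x + proj ip S y)) = 0" by (metis ip_addr add.right_neutral)
  qed
qed

lemma proj_sc: assumes "hasproj S" shows "proj ip S (sc c x) = sc c (proj ip S x)"
proof (rule proj_unique)
  show "cs S" using assms hasproj_cs by auto
  show "sc c (proj ip S x) \<in> S" using proj_in[OF assms] cs_sc hasproj_cs[OF assms] by auto
  show "\<forall>s\<in>S. ip s (sc c x - sc c (proj ip S x)) = 0"
    using proj_prop(2)[OF assms] by (simp add: sc_diff_right[symmetric] ip_scr)
qed

lemma proj_neg: assumes "hasproj S" shows "proj ip S (- x) = - proj ip S x"
  using proj_sc[OF assms, of "-1" x] by (simp add: sc_neg1)

lemma proj_diff: assumes "hasproj S" shows "proj ip S (x - y) = proj ip S x - proj ip S y"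
  using proj_add[OF assms, of x "-y"] proj_neg[OF assms, of y] by simp

lemma proj_norm: assumes "hasproj S"
  shows "(norm (proj ip S x))\<^sup>2 + (norm (x - proj ip S x))\<^sup>2 = (norm x)\<^sup>2"
proof -
  have "ip (proj ip S x) (x - proj ip S x) = 0" using proj_prop[OF assms] by auto
  from pyth[OF this] show ?thesis by simp
qed

lemma proj_le: "hasproj S \<Longrightarrow> norm (proj ip S x) \<le> norm x"
  using proj_norm[of S x] by (smt (verit) norm_ge_zero power2_le_imp_le zero_le_power2)
lemma proj_comp_le: "hasproj S \<Longrightarrow> norm (x - proj ip S x) \<le> norm x"
  using proj_norm[of S x] by (smt (verit) norm_ge_zero power2_le_imp_le zero_le_power2)

lemma ssum_mem: "a \<in> A \<Longrightarrow> b \<in> B \<Longrightarrow> a + b \<in> ssum A B"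
  unfolding ssum_def by auto

lemma cs_ssum: assumes "cs A" "cs B" shows "cs (ssum A B)"
  unfolding csubspace_of_def
proof (intro conjI ballI allI)
  show "0 \<in> ssum A B" using ssum_mem[OF cs_0[OF assms(1)] cs_0[OF assms(2)]] by simp
next
  fix x y assume "x \<in> ssum A B" "y \<in> ssum A B"
  then obtain a b a' b' where "x = a + b" "y = a' + b'" "a \<in> A" "b \<in> B" "a' \<in> A" "b' \<in> B"
    unfolding ssum_def by auto
  then show "x + y \<in> ssum A B"
    using ssum_mem[of "a+a'" A "b+b'" B] cs_add assms by (simp add: algebra_simps)
next
  fix c x assume "x \<in> ssum A B"
  then obtain a b where "x = a + b" "a \<in> A" "b \<in> B" unfolding ssum_def by auto
  then show "sc c x \<in> ssum A B" using ssum_mem[of "sc c a" A "sc c b" B] cs_sc assms by (simp add: sc_addr)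
qed

lemma orth_sym: "orth ip A B \<Longrightarrow> orth ip B A"
  unfolding orth_def using ip_orth_sym by blast

lemma orth_ssum_l: "orth ip A C \<Longrightarrow> orth ip B C \<Longrightarrow> orth ip (ssum A B) C"
  unfolding orth_def ssum_def by (auto simp: ip_addl)
lemma orth_ssum_r: "orth ip C A \<Longrightarrow> orth ip C B \<Longrightarrow> orth ip C (ssum A B)"
  using orth_ssum_l orth_sym by blast
lemma orth_mono: "orth ip A B \<Longrightarrow> A' \<subseteq> A \<Longrightarrow> B' \<subseteq> B \<Longrightarrow> orth ip A' B'"
  unfolding orth_def by blast

lemma proj_ssum:
  assumes A: "hasproj A" and B: "hasproj B" and o: "orth ip A B"
  shows "hasproj (ssum A B)" "proj ip (ssum A B) x = proj ip A x + proj ip B x"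
proof -
  have c: "cs (ssum A B)" using cs_ssum hasproj_cs A B by auto
  have key: "\<forall>s\<in>ssum A B. ip s (y - (proj ip A y + proj ip B y)) = 0" for y
  proof
    fix s assume "s \<in> ssum A B"
    then obtain a b where ab: "s = a + b" "a \<in> A" "b \<in> B" unfolding ssum_def by auto
    have 1: "ip a (y - proj ip A y) = 0" "ip b (y - proj ip B y) = 0" using proj_prop A B ab by auto
    have 2: "ip a (proj ip B y) = 0" using o ab proj_in[OF B] unfolding orth_def by auto
    have 3: "ip b (proj ip A y) = 0" using o ab proj_in[OF A] ip_orth_sym unfolding orth_def by auto
    have "y - (proj ip A y + proj ip B y) = (y - proj ip A y) - proj ip B y" by simp
    moreover have "y - (proj ip A y + proj ip B y) = (y - proj ip B y) - proj ip A y" by simp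
    ultimately show "ip s (y - (proj ip A y + proj ip B y)) = 0"
      using 1 2 3 ab by (simp add: ip_addl ip_addr ip_diff_right)
  qed
  have mem: "proj ip A y + proj ip B y \<in> ssum A B" for y using ssum_mem[OF proj_in[OF A] proj_in[OF B]] .
  show "hasproj (ssum A B)" unfolding hasproj_def using c key mem by blast
  show "proj ip (ssum A B) x = proj ip A x + proj ip B x" using proj_unique[OF c mem key] .
qed

lemma ssum_zero_l: "cs A \<Longrightarrow> ssum {0} A = A" unfolding ssum_def by auto
lemma ssum_zero_r: "cs A \<Longrightarrow> ssum A {0} = A" unfolding ssum_def by auto
lemma hasproj_zero: "hasproj {0}" unfolding hasproj_def csubspace_of_def by auto
lemma proj_zero_set: "proj ip {0} x = 0" using proj_zero[of "{0}"] hasproj_zero hasproj_cs by auto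

end


context CH begin

lemma min_orth:
  assumes cS: "cs S" and p: "p \<in> S" and minp: "\<forall>s\<in>S. (norm (x - p))\<^sup>2 \<le> (norm (x - s))\<^sup>2"
  shows "\<forall>s\<in>S. ip s (x - p) = 0"
proof
  fix s0 assume s0: "s0 \<in> S"
  define r where "r = x - p"
  have reals: "Re (ip s r) = 0" if s: "s \<in> S" for s
  proof -
    define a where "a = Re (ip s r)"
    define b where "b = (norm s)\<^sup>2"
    have b0: "0 \<le> b" unfolding b_def by simp
    have expand: "(norm (r - t *\<^sub>R s))\<^sup>2 = (norm r)\<^sup>2 - 2*t*a + t\<^sup>2 * b" for t
    proof -
      have "(norm (r - t *\<^sub>R s))\<^sup>2 = Re (ip (r - t *\<^sub>R s) (r - t *\<^sub>R s))" by (rule norm_ip)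
      also have "ip (r - t *\<^sub>R s) (r - t *\<^sub>R s) = ip r r - complex_of_real t * ip r s
          - complex_of_real t * ip s r + complex_of_real t * complex_of_real t * ip s s"
        by (simp add: ip_diff_left ip_diff_right ip_scaleR_l ip_scaleR_r algebra_simps)
      also have "ip r s = cnj (ip s r)" by (rule ip_cnj)
      finally have e1: "(norm (r - t *\<^sub>R s))\<^sup>2 = Re (ip r r - complex_of_real t * cnj (ip s r)
          - complex_of_real t * ip s r + complex_of_real t * complex_of_real t * ip s s)" .
      have e2: "Re (ip r r - complex_of_real t * cnj (ip s r)
          - complex_of_real t * ip s r + complex_of_real t * complex_of_real t * ip s s)
          = Re (ip r r) - 2*t*a + t\<^sup>2 * Re (ip s s)" unfolding a_def by (simp add: power2_eq_square)
      have H: "(norm (r - t *\<^sub>R s))\<^sup>2 = Re (ip r r) - 2*t*a + t\<^sup>2 * Re (ip s s)"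
        using trans[OF e1 e2] .
      have N2: "b = Re (ip s s)" unfolding b_def by (rule norm_ip)
      show ?thesis by (simp only: H norm_ip[of r] N2)
    qed
    have ineq: "0 \<le> - 2*t*a + t\<^sup>2 * b" for t
    proof -
      have "p + t *\<^sub>R s \<in> S" using cs_add[OF cS p cs_scaleR[OF cS s]] .
      then have "(norm (x - p))\<^sup>2 \<le> (norm (x - (p + t *\<^sub>R s)))\<^sup>2" using minp by blast
      moreover have "x - (p + t *\<^sub>R s) = r - t *\<^sub>R s" unfolding r_def by simp
      ultimately show ?thesis using expand[of t] unfolding r_def by simp
    qed
    define t where "t = a / (b + 1)"
    have ta: "t * (b + 1) = a" unfolding t_def using b0 by simp
    have "- 2*t*a + t\<^sup>2 * b = - t\<^sup>2 * (b + 2)"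
      unfolding ta[symmetric] by (simp add: power2_eq_square algebra_simps)
    with ineq[of t] have "t\<^sup>2 * (b + 2) \<le> 0" by simp
    moreover have "0 \<le> t\<^sup>2 * (b + 2)" using b0 by simp
    ultimately have "t\<^sup>2 * (b + 2) = 0" by simp
    then have "t = 0" using b0 by simp
    then show "Re (ip s r) = 0" using ta a_def by simp
  qed
  have "Re (ip s0 r) = 0" using reals s0 .
  moreover have "Re (ip (sc \<i> s0) r) = 0" using reals cs_sc[OF cS s0] by blast
  then have "Im (ip s0 r) = 0" by (simp add: ip_scl)
  ultimately show "ip s0 (x - p) = 0" unfolding r_def by (simp add: complex_eq_iff)
qed

lemma proj_exists:
  assumes cS: "cs S" and clS: "closed S"
  shows "\<exists>p\<in>S. \<forall>s\<in>S. ip s (x - p) = 0"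
proof -
  define f where "f s = (norm (x - s))\<^sup>2" for s
  define d where "d = Inf (f ` S)"
  have ne: "f ` S \<noteq> {}" using cs_0[OF cS] by auto
  have bdd: "bdd_below (f ` S)" unfolding f_def bdd_below_def by (auto intro!: exI[of _ 0])
  have dle: "d \<le> f s" if "s \<in> S" for s using cInf_lower[OF _ bdd] that d_def by auto
  have ex: "\<exists>s. s \<in> S \<and> f s < d + inverse (real (Suc n))" for n
  proof -
    have "Inf (f ` S) < d + inverse (real (Suc n))" using d_def by simp
    then show ?thesis using cInf_lessD[OF ne] by auto
  qed
  then obtain sq where sq: "\<And>n. sq n \<in> S" "\<And>n. f (sq n) < d + inverse (real (Suc n))"
    by metis
  have cd: "(norm (sq m - sq n))\<^sup>2 \<le> 2 * inverse (real (Suc m)) + 2 * inverse (real (Suc n))" for m n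
  proof -
    define a where "a = x - sq m"
    define b where "b = x - sq n"
    have pg: "(norm (a + b))\<^sup>2 + (norm (a - b))\<^sup>2 = 2*(norm a)\<^sup>2 + 2*(norm b)\<^sup>2" by (rule parallelogram)
    define mid where "mid = (1/2) *\<^sub>R (sq m + sq n)"
    have midS: "mid \<in> S" unfolding mid_def using cs_scaleR[OF cS cs_add[OF cS sq(1) sq(1)]] .
    have "a + b = 2 *\<^sub>R (x - mid)" unfolding a_def b_def mid_def scaleR_diff_right scaleR_scaleR by (simp add: scaleR_2)
    then have "(norm (a + b))\<^sup>2 = 4 * f mid" unfolding f_def by (simp add: power_mult_distrib)
    moreover have "(norm (a - b))\<^sup>2 = (norm (sq m - sq n))\<^sup>2" unfolding a_def b_def by (simp add: norm_minus_commute)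
    moreover have "(norm a)\<^sup>2 = f (sq m)" "(norm b)\<^sup>2 = f (sq n)" unfolding a_def b_def f_def by auto
    moreover note dle[OF midS] sq(2)[of m] sq(2)[of n]
    ultimately show ?thesis using pg by linarith
  qed
  have "Cauchy sq"
    unfolding Cauchy_def
  proof (intro allI impI)
    fix e :: real assume e: "0 < e"
    obtain N :: nat where N: "4 / e\<^sup>2 < real N" using reals_Archimedean2 by blast
    have N2: "4 * inverse (real (Suc N)) < e\<^sup>2"
    proof -
      have "4 < e\<^sup>2 * real N" using N e by (simp add: field_simps)
      also have "... \<le> e\<^sup>2 * real (Suc N)" using e by simp
      finally show ?thesis by (simp add: field_simps)
    qed
    show "\<exists>M. \<forall>m\<ge>M. \<forall>n\<ge>M. dist (sq m) (sq n) < e"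
    proof (intro exI allI impI)
      fix m n assume mn: "N \<le> m" "N \<le> n"
      have "inverse (real (Suc m)) \<le> inverse (real (Suc N))" "inverse (real (Suc n)) \<le> inverse (real (Suc N))"
        using mn by (auto intro!: le_imp_inverse_le)
      then have "(norm (sq m - sq n))\<^sup>2 < e\<^sup>2" using cd[of m n] N2 by linarith
      then have "norm (sq m - sq n) < e" using e by (simp add: power_less_imp_less_base)
      then show "dist (sq m) (sq n) < e" by (simp add: dist_norm)
    qed
  qed
  then obtain p where p: "sq \<longlonglongrightarrow> p" using Cauchy_convergent_iff convergent_def by blast
  have pS: "p \<in> S" using closed_sequentially[OF clS sq(1) p] .
  have l1: "(\<lambda>n. f (sq n)) \<longlonglongrightarrow> f p" unfolding f_def by (intro tendsto_intros p)
  have l2: "(\<lambda>n. d + inverse (real (Suc n))) \<longlonglongrightarrow> d"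
    using tendsto_add[OF tendsto_const LIMSEQ_inverse_real_of_nat, of d] by simp
  have "f p \<le> d" using LIMSEQ_le[OF l1 l2] sq(2) less_imp_le by blast
  then have "\<forall>s\<in>S. (norm (x - p))\<^sup>2 \<le> (norm (x - s))\<^sup>2"
    using dle unfolding f_def by (meson order_trans)
  from min_orth[OF cS pS this] pS show ?thesis by blast
qed

lemma closed_hasproj: "closed_csubspace sc S \<Longrightarrow> hasproj S"
  unfolding closed_csubspace_def hasproj_def using proj_exists by blast

end


context CH begin

lemma unitary_props:
  assumes W: "unitary_on sc ip K W" and cK: "cs K"
  shows "\<forall>a\<in>K. W a \<in> K" "\<forall>a\<in>K. \<forall>b\<in>K. W (a - b) = W a - W b" "\<forall>a\<in>K. norm (W a) = norm a"
    "\<forall>y\<in>K. \<exists>x\<in>K. W x = y"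
proof -
  show "\<forall>a\<in>K. W a \<in> K" "\<forall>y\<in>K. \<exists>x\<in>K. W x = y" using W unfolding unitary_on_def by auto
  show "\<forall>a\<in>K. \<forall>b\<in>K. W (a - b) = W a - W b"
  proof (intro ballI)
    fix a b assume ab: "a \<in> K" "b \<in> K"
    have "a - b \<in> K" using cs_diff[OF cK ab] .
    then have "W (a - b + b) = W (a - b) + W b" using W ab unfolding unitary_on_def by blast
    then show "W (a - b) = W a - W b" by (simp add: algebra_simps)
  qed
  show "\<forall>a\<in>K. norm (W a) = norm a"
  proof
    fix a assume a: "a \<in> K"
    have "ip (W a) (W a) = ip a a" using W a unfolding unitary_on_def by blast
    then have "(norm (W a))\<^sup>2 = (norm a)\<^sup>2" by (simp add: norm_ip)
    then show "norm (W a) = norm a" by (simp add: power2_eq_imp_eq)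
  qed
qed

lemma solve_unique:
  assumes cK: "cs K" and S: "hasproj S"
    and Wd: "\<forall>a\<in>K. \<forall>b\<in>K. W (a - b) = W a - W b" and Wn: "\<forall>a\<in>K. norm (W a) = norm a"
    and z: "cmod z < 1"
    and y1: "y1 \<in> K" "W y1 - sc z (y1 - proj ip S y1) = x"
    and y2: "y2 \<in> K" "W y2 - sc z (y2 - proj ip S y2) = x"
  shows "y1 = y2"
proof -
  define d where "d = y1 - y2"
  have dK: "d \<in> K" unfolding d_def using cs_diff[OF cK y1(1) y2(1)] .
  have "W d = W y1 - W y2" unfolding d_def using Wd y1(1) y2(1) by blast
  also have "... = sc z (y1 - proj ip S y1) - sc z (y2 - proj ip S y2)"
    using y1(2) y2(2) by (simp add: algebra_simps)
  also have "... = sc z (d - proj ip S d)"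
    unfolding d_def sc_diff_right[symmetric] proj_diff[OF S] by (simp add: algebra_simps)
  finally have Wdd: "W d = sc z (d - proj ip S d)" .
  have "norm d = norm (W d)" using Wn dK by simp
  also have "... = cmod z * norm (d - proj ip S d)" unfolding Wdd by (rule norm_sc)
  also have "... \<le> cmod z * norm d" using proj_comp_le[OF S] by (simp add: mult_left_mono)
  finally have "norm d \<le> cmod z * norm d" .
  then have "(1 - cmod z) * norm d \<le> 0" by (simp add: algebra_simps)
  then have "norm d = 0" using z by (smt (verit) mult_pos_pos norm_ge_zero)
  then show ?thesis unfolding d_def by simp
qed

lemma solve_exists:
  assumes K: "hasproj K" and S: "hasproj S" and SK: "S \<subseteq> K" and W: "unitary_on sc ip K W"
    and z: "cmod z < 1" and x: "x \<in> K"
  shows "\<exists>y\<in>K. W y - sc z (y - proj ip S y) = x"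
proof -
  have cK: "cs K" using hasproj_cs[OF K] .
  note U = unitary_props[OF W cK]
  define Wi where "Wi = inv_into K W"
  have Wi: "Wi u \<in> K" "W (Wi u) = u" if "u \<in> K" for u
  proof -
    have "u \<in> W ` K" using U(4) that by auto
    then show "Wi u \<in> K" "W (Wi u) = u" unfolding Wi_def by (auto intro: inv_into_into f_inv_into_f)
  qed
  define Q where "Q v = v - proj ip S v" for v
  define PK where "PK = proj ip K"
  define arg where "arg y = x + sc z (Q (PK y))" for y
  have argK: "arg y \<in> K" for y
  proof -
    have "PK y \<in> K" unfolding PK_def using proj_in[OF K] .
    moreover have "proj ip S (PK y) \<in> K" using proj_in[OF S] SK by auto
    ultimately have "Q (PK y) \<in> K" unfolding Q_def using cs_diff[OF cK] by auto
    then show ?thesis unfolding arg_def using cs_add[OF cK x] cs_sc[OF cK] by auto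
  qed
  define T where "T y = Wi (arg y)" for y
  have contr: "dist (T a) (T b) \<le> cmod z * dist a b" for a b
  proof -
    have "dist (T a) (T b) = norm (Wi (arg a) - Wi (arg b))" unfolding T_def dist_norm ..
    also have "... = norm (W (Wi (arg a) - Wi (arg b)))"
      using U(3) cs_diff[OF cK Wi(1)[OF argK] Wi(1)[OF argK]] by simp
    also have "... = norm (arg a - arg b)"
      using U(2) Wi[OF argK] by simp
    also have "arg a - arg b = sc z (Q (PK a) - Q (PK b))" unfolding arg_def sc_diff_right by simp
    also have "Q (PK a) - Q (PK b) = PK (a - b) - proj ip S (PK (a - b))"
      unfolding Q_def PK_def proj_diff[OF K] proj_diff[OF S] by simp
    also have "norm (sc z (PK (a - b) - proj ip S (PK (a - b)))) = cmod z * norm (PK (a - b) - proj ip S (PK (a - b)))"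
      by (rule norm_sc)
    also have "... \<le> cmod z * norm (a - b)"
    proof -
      have "norm (PK (a - b) - proj ip S (PK (a - b))) \<le> norm (PK (a - b))" using proj_comp_le[OF S] .
      also have "... \<le> norm (a - b)" unfolding PK_def using proj_le[OF K] .
      finally show ?thesis by (simp add: mult_left_mono)
    qed
    finally show ?thesis by (simp add: dist_norm)
  qed
  obtain y where y: "T y = y" using banach_fix_type[of "cmod z" T] z contr by auto
  have yK: "y \<in> K" using y Wi(1)[OF argK] unfolding T_def by metis
  have "W y = arg y" using y Wi(2)[OF argK] unfolding T_def by metis
  moreover have "PK y = y" unfolding PK_def using proj_id[OF cK yK] .
  ultimately have "W y = x + sc z (y - proj ip S y)" unfolding arg_def Q_def by simp
  then show ?thesis using yK by (intro bexI[of _ y]) (simp_all add: algebra_simps)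
qed

lemma schur_eq:
  assumes cK: "cs K" and S: "hasproj S"
    and Wd: "\<forall>a\<in>K. \<forall>b\<in>K. W (a - b) = W a - W b" and Wn: "\<forall>a\<in>K. norm (W a) = norm a"
    and z: "cmod z < 1" and y: "y \<in> K" "W y - sc z (y - proj ip S y) = x"
  shows "schur sc ip W K S z x = proj ip S y"
proof -
  have "(THE y. y \<in> K \<and> W y - sc z (y - proj ip S y) = x) = y"
    by (rule the_equality) (use y solve_unique[OF cK S Wd Wn z] in blast)+
  then show ?thesis unfolding schur_def by simp
qed

lemma schur_in: "hasproj S \<Longrightarrow> schur sc ip W K S z x \<in> S"
  unfolding schur_def using proj_in by blast

end


context CH begin

lemma ssum_mono: "A \<subseteq> A' \<Longrightarrow> B \<subseteq> B' \<Longrightarrow> ssum A B \<subseteq> ssum A' B'"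
  unfolding ssum_def by blast
lemma ssum_mem_l: "cs B \<Longrightarrow> a \<in> A \<Longrightarrow> a \<in> ssum A B"
  using ssum_mem[of a A 0 B] cs_0 by auto
lemma ssum_mem_r: "cs A \<Longrightarrow> b \<in> B \<Longrightarrow> b \<in> ssum A B"
  using ssum_mem[of 0 A b B] cs_0 by auto
lemma cs_UNIV: "cs UNIV" unfolding csubspace_of_def by auto

lemma core:
  fixes HL HC HR VL VR :: "'a set" and U ULC UCR :: "'a \<Rightarrow> 'a"
  assumes hL: "hasproj HL" and hC: "hasproj HC" and hR: "hasproj HR"
    and hVL: "hasproj VL" and hVR: "hasproj VR"
    and oLC: "orth ip HL HC" and oCR: "orth ip HC HR" and oLR: "orth ip HL HR"
    and decomp: "ssum (ssum HL HC) HR = UNIV"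
    and uLC: "unitary_on sc ip (ssum HL HC) ULC"
    and uCR: "unitary_on sc ip (ssum HC HR) UCR"
    and U_def: "\<forall>x. U x =
         (let y = proj ip HL x + UCR (proj ip (ssum HC HR) x)
          in ULC (proj ip (ssum HL HC) y) + proj ip HR y)"
    and VL_sub: "VL \<subseteq> HL" and VR_sub: "VR \<subseteq> HR"
  shows "\<forall>z. cmod z < 1 \<longrightarrow> (\<forall>x \<in> ssum (ssum VL HC) VR.
            schur sc ip U UNIV (ssum (ssum VL HC) VR) z x =
              (let w = schur sc ip ULC (ssum HL HC) (ssum VL HC) z (proj ip (ssum VL HC) x)
                       + proj ip VR x
               in proj ip VL w
                  + schur sc ip UCR (ssum HC HR) (ssum HC VR) z (proj ip (ssum HC VR) w)))"
proof -
  let ?PL = "proj ip HL" and ?PC = "proj ip HC" and ?PR = "proj ip HR"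
  let ?PVL = "proj ip VL" and ?PVR = "proj ip VR"
  let ?K1 = "ssum HL HC" and ?K2 = "ssum HC HR" and ?S1 = "ssum VL HC" and ?S2 = "ssum HC VR"
  let ?V = "ssum ?S1 VR"
  have oCL: "orth ip HC HL" and oRC: "orth ip HR HC" and oRL: "orth ip HR HL" using oLC oCR oLR orth_sym by auto
  have oVLC: "orth ip VL HC" using orth_mono[OF oLC VL_sub] by simp
  have oCVR: "orth ip HC VR" using orth_mono[OF oCR _ VR_sub] by simp
  have oVLVR: "orth ip VL VR" using orth_mono[OF oLR VL_sub VR_sub] .
  have oVLR: "orth ip VL HR" using orth_mono[OF oLR VL_sub] by simp
  have oLVR: "orth ip HL VR" using orth_mono[OF oLR _ VR_sub] by simp
  have oCVL: "orth ip HC VL" "orth ip VR HC" "orth ip VR VL" "orth ip HR VL" "orth ip VR HL"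
    using oVLC oCVR oVLVR oVLR oLVR orth_sym by auto
  have oLK2: "orth ip HL ?K2" using orth_ssum_r[OF oLC oLR] .
  have oK2L: "orth ip ?K2 HL" using orth_sym[OF oLK2] .
  have oK1R: "orth ip ?K1 HR" using orth_ssum_l[OF oLR oCR] .
  have oS1VR: "orth ip ?S1 VR" using orth_ssum_l[OF oVLVR oCVR] .
  have hK1: "hasproj ?K1" and pK1: "\<And>u. proj ip ?K1 u = ?PL u + ?PC u" using proj_ssum[OF hL hC oLC] by auto
  have hK2: "hasproj ?K2" and pK2: "\<And>u. proj ip ?K2 u = ?PC u + ?PR u" using proj_ssum[OF hC hR oCR] by auto
  have hS1: "hasproj ?S1" and pS1: "\<And>u. proj ip ?S1 u = ?PVL u + ?PC u" using proj_ssum[OF hVL hC oVLC] by auto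
  have hS2: "hasproj ?S2" and pS2: "\<And>u. proj ip ?S2 u = ?PC u + ?PVR u" using proj_ssum[OF hC hVR oCVR] by auto
  have hV: "hasproj ?V" and pV: "\<And>u. proj ip ?V u = ?PVL u + ?PC u + ?PVR u"
    using proj_ssum[OF hS1 hVR oS1VR] pS1 by auto
  have hK1R: "hasproj (ssum ?K1 HR)" and pK1R: "\<And>u. proj ip (ssum ?K1 HR) u = ?PL u + ?PC u + ?PR u"
    using proj_ssum[OF hK1 hR oK1R] pK1 by auto
  have full: "u = ?PL u + ?PC u + ?PR u" for u
    using pK1R[of u] proj_id[OF cs_UNIV, of u] decomp by simp
  have cK1: "cs ?K1" and cK2: "cs ?K2" and cV: "cs ?V" and cS1: "cs ?S1" and cS2: "cs ?S2"
    using hK1 hK2 hV hS1 hS2 hasproj_cs by auto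
  have cL: "cs HL" and cC: "cs HC" and cR: "cs HR" and cVL: "cs VL" and cVR: "cs VR"
    using hL hC hR hVL hVR hasproj_cs by auto
  note lin = proj_add[OF hL] proj_add[OF hC] proj_add[OF hR] proj_add[OF hVL] proj_add[OF hVR]
    proj_diff[OF hL] proj_diff[OF hC] proj_diff[OF hR] proj_diff[OF hVL] proj_diff[OF hVR]
    proj_sc[OF hL] proj_sc[OF hC] proj_sc[OF hR] proj_sc[OF hVL] proj_sc[OF hVR]
  have ins: "\<And>u. ?PL u \<in> HL" "\<And>u. ?PC u \<in> HC" "\<And>u. ?PR u \<in> HR" "\<And>u. ?PVL u \<in> VL"
    "\<And>u. ?PVR u \<in> VR" "\<And>u. ?PVL u \<in> HL" "\<And>u. ?PVR u \<in> HR"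
    using proj_in hL hC hR hVL hVR VL_sub VR_sub by blast+
  have zer: "\<And>u. u \<in> HC \<Longrightarrow> ?PL u = 0" "\<And>u. u \<in> HR \<Longrightarrow> ?PL u = 0" "\<And>u. u \<in> VR \<Longrightarrow> ?PL u = 0"
    "\<And>u. u \<in> HL \<Longrightarrow> ?PC u = 0" "\<And>u. u \<in> HR \<Longrightarrow> ?PC u = 0" "\<And>u. u \<in> VL \<Longrightarrow> ?PC u = 0"
    "\<And>u. u \<in> VR \<Longrightarrow> ?PC u = 0"
    "\<And>u. u \<in> HL \<Longrightarrow> ?PR u = 0" "\<And>u. u \<in> HC \<Longrightarrow> ?PR u = 0" "\<And>u. u \<in> VL \<Longrightarrow> ?PR u = 0"
    "\<And>u. u \<in> HC \<Longrightarrow> ?PVL u = 0" "\<And>u. u \<in> HR \<Longrightarrow> ?PVL u = 0" "\<And>u. u \<in> VR \<Longrightarrow> ?PVL u = 0"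
    "\<And>u. u \<in> HL \<Longrightarrow> ?PVR u = 0" "\<And>u. u \<in> HC \<Longrightarrow> ?PVR u = 0" "\<And>u. u \<in> VL \<Longrightarrow> ?PVR u = 0"
    using proj_orth0[OF hL oLC] proj_orth0[OF hL oLR] proj_orth0[OF hL oLVR]
      proj_orth0[OF hC oCL] proj_orth0[OF hC oCR] proj_orth0[OF hC oCVL(1)] proj_orth0[OF hC oCVR]
      proj_orth0[OF hR oRL] proj_orth0[OF hR oRC] proj_orth0[OF hR oCVL(4)]
      proj_orth0[OF hVL oVLC] proj_orth0[OF hVL oVLR] proj_orth0[OF hVL oVLVR]
      proj_orth0[OF hVR oCVL(5)] proj_orth0[OF hVR oCVL(2)] proj_orth0[OF hVR oCVL(3)]
    by blast+
  have ids: "\<And>u. u \<in> HL \<Longrightarrow> ?PL u = u" "\<And>u. u \<in> HC \<Longrightarrow> ?PC u = u" "\<And>u. u \<in> HR \<Longrightarrow> ?PR u = u"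
    "\<And>u. u \<in> VL \<Longrightarrow> ?PVL u = u" "\<And>u. u \<in> VR \<Longrightarrow> ?PVR u = u"
    using proj_id cL cC cR cVL cVR by blast+
  note calc = lin ins zer ids
  note UL = unitary_props[OF uLC cK1] and UR = unitary_props[OF uCR cK2]
  define Bf where "Bf x = ?PL x + UCR (?PC x + ?PR x)" for x
  define Af where "Af y = ULC (?PL y + ?PC y) + ?PR y" for y
  have Uform: "U x = Af (Bf x)" for x using U_def unfolding Af_def Bf_def Let_def pK1 pK2 by simp
  have inK1: "?PL u + ?PC u \<in> ?K1" for u using ssum_mem ins by blast
  have inK2: "?PC u + ?PR u \<in> ?K2" for u using ssum_mem ins by blast
  have Ud: "U (a - b) = U a - U b" for a b
  proof -
    have Bd: "Bf (a - b) = Bf a - Bf b" for a b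
    proof -
      have "UCR (?PC (a - b) + ?PR (a - b)) = UCR (?PC a + ?PR a) - UCR (?PC b + ?PR b)"
        using UR(2) inK2[of a] inK2[of b] by (simp add: lin algebra_simps)
      then show ?thesis unfolding Bf_def by (simp add: lin)
    qed
    have Ad: "Af (a - b) = Af a - Af b" for a b
    proof -
      have "ULC (?PL (a - b) + ?PC (a - b)) = ULC (?PL a + ?PC a) - ULC (?PL b + ?PC b)"
        using UL(2) inK1[of a] inK1[of b] by (simp add: lin algebra_simps)
      then show ?thesis unfolding Af_def by (simp add: lin)
    qed
    show ?thesis unfolding Uform Bd Ad ..
  qed
  have Un: "norm (U a) = norm a" for a
  proof -
    have orthsum: "(norm (p + q))\<^sup>2 = (norm p)\<^sup>2 + (norm q)\<^sup>2" if "orth ip A B" "p \<in> A" "q \<in> B" for A B p q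
      using pyth that unfolding orth_def by blast
    have nB: "norm (Bf x) = norm x" for x
    proof -
      have m: "UCR (?PC x + ?PR x) \<in> ?K2" using UR(1) inK2 by blast
      have "(norm (Bf x))\<^sup>2 = (norm (?PL x))\<^sup>2 + (norm (UCR (?PC x + ?PR x)))\<^sup>2"
        unfolding Bf_def using orthsum[OF oLK2 ins(1) m] .
      also have "norm (UCR (?PC x + ?PR x)) = norm (?PC x + ?PR x)" using UR(3) inK2 by blast
      also have "(norm (?PL x))\<^sup>2 + (norm (?PC x + ?PR x))\<^sup>2 = (norm (?PL x + (?PC x + ?PR x)))\<^sup>2"
        using orthsum[OF oLK2 ins(1) inK2] by simp
      also have "?PL x + (?PC x + ?PR x) = x" using full[of x] by (simp add: add.assoc)
      finally show ?thesis by (simp add: power2_eq_imp_eq)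
    qed
    have nA: "norm (Af x) = norm x" for x
    proof -
      have m: "ULC (?PL x + ?PC x) \<in> ?K1" using UL(1) inK1 by blast
      have "(norm (Af x))\<^sup>2 = (norm (ULC (?PL x + ?PC x)))\<^sup>2 + (norm (?PR x))\<^sup>2"
        unfolding Af_def using orthsum[OF oK1R m ins(3)] .
      also have "norm (ULC (?PL x + ?PC x)) = norm (?PL x + ?PC x)" using UL(3) inK1 by blast
      also have "(norm (?PL x + ?PC x))\<^sup>2 + (norm (?PR x))\<^sup>2 = (norm (?PL x + ?PC x + ?PR x))\<^sup>2"
        using orthsum[OF oK1R inK1 ins(3)] by simp
      also have "?PL x + ?PC x + ?PR x = x" using full[of x] by simp
      finally show ?thesis by (simp add: power2_eq_imp_eq)
    qed
    show ?thesis unfolding Uform nA nB ..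
  qed
  show ?thesis
  proof (intro allI impI ballI)
    fix z x assume z: "cmod z < 1" and x: "x \<in> ?V"
    have xdec: "x = ?PVL x + ?PC x + ?PVR x" using trans[OF proj_id[OF cV x, symmetric] pV[of x]] .
    define xLC where "xLC = ?PVL x + ?PC x"
    have xLCK1: "xLC \<in> ?K1" unfolding xLC_def by (rule ssum_mem[OF ins(6) ins(2)])
    have S1K1: "?S1 \<subseteq> ?K1" using ssum_mono[OF VL_sub order_refl] .
    obtain y1 where y1: "y1 \<in> ?K1" "ULC y1 - sc z (y1 - proj ip ?S1 y1) = xLC"
      using solve_exists[OF hK1 hS1 S1K1 uLC z xLCK1] by blast
    have fL: "schur sc ip ULC ?K1 ?S1 z (proj ip ?S1 x) = ?PVL y1 + ?PC y1"
      using schur_eq[OF cK1 hS1 UL(2) UL(3) z y1] pS1 xLC_def by simp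
    have y1d: "y1 = ?PL y1 + ?PC y1" using trans[OF proj_id[OF cK1 y1(1), symmetric] pK1] .
    define w where "w = ?PVL y1 + ?PC y1 + ?PVR x"
    have pS2w: "proj ip ?S2 w = ?PC y1 + ?PVR x" unfolding pS2 w_def by (simp add: calc)
    have PVLw: "?PVL w = ?PVL y1" unfolding w_def by (simp add: calc)
    define w2 where "w2 = ?PC y1 + ?PVR x"
    have w2K2: "w2 \<in> ?K2" unfolding w2_def by (rule ssum_mem[OF ins(2) ins(7)])
    have S2K2: "?S2 \<subseteq> ?K2" using ssum_mono[OF order_refl VR_sub] .
    obtain y2 where y2: "y2 \<in> ?K2" "UCR y2 - sc z (y2 - proj ip ?S2 y2) = w2"
      using solve_exists[OF hK2 hS2 S2K2 uCR z w2K2] by blast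
    have fR: "schur sc ip UCR ?K2 ?S2 z w2 = ?PC y2 + ?PVR y2"
      using schur_eq[OF cK2 hS2 UR(2) UR(3) z y2] pS2 by simp
    have y2d: "y2 = ?PC y2 + ?PR y2" using trans[OF proj_id[OF cK2 y2(1), symmetric] pK2] .
    have RHS: "(let w = schur sc ip ULC ?K1 ?S1 z (proj ip ?S1 x) + ?PVR x
               in ?PVL w + schur sc ip UCR ?K2 ?S2 z (proj ip ?S2 w)) = ?PVL y1 + (?PC y2 + ?PVR y2)"
    proof -
      have "schur sc ip ULC ?K1 ?S1 z (proj ip ?S1 x) + ?PVR x = w" using fL w_def by simp
      then show ?thesis unfolding Let_def using PVLw pS2w fR w2_def by simp
    qed
    define y where "y = ?PL y1 + y2"
    have PLy2: "?PL y2 = 0" using proj_orth0[OF hL oLK2 y2(1)] .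
    have y2L: "?PVL y2 = 0" using arg_cong[OF y2d, of ?PVL] by (simp add: calc)
    have y2C: "?PC y2 = ?PC y2" ..
    have y1L: "?PVL (?PL y1) = ?PVL y1" using arg_cong[OF y1d, of ?PVL] by (simp add: calc)
    have Pvy: "proj ip ?V y = ?PVL y1 + (?PC y2 + ?PVR y2)"
      unfolding pV y_def by (simp add: calc y2L y1L)
    define q1 where "q1 = y1 - proj ip ?S1 y1"
    define q2 where "q2 = y2 - proj ip ?S2 y2"
    have q2R: "q2 = ?PR y2 - ?PVR y2"
    proof -
      have "y2 - (?PC y2 + ?PVR y2) = (?PC y2 + ?PR y2) - (?PC y2 + ?PVR y2)"
        by (rule arg_cong[OF y2d, of "\<lambda>t. t - (?PC y2 + ?PVR y2)"])
      then show ?thesis unfolding q2_def pS2 by simp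
    qed
    have q1L: "q1 = ?PL y1 - ?PVL y1"
    proof -
      have "y1 - (?PVL y1 + ?PC y1) = (?PL y1 + ?PC y1) - (?PVL y1 + ?PC y1)"
        by (rule arg_cong[OF y1d, of "\<lambda>t. t - (?PVL y1 + ?PC y1)"])
      then show ?thesis unfolding q1_def pS1 by simp
    qed
    have CRy: "?PC y + ?PR y = y2"
    proof -
      have "?PC y + ?PR y = ?PC y2 + ?PR y2" unfolding y_def by (simp add: calc)
      then show ?thesis using y2d[symmetric] by simp
    qed
    have PLy: "?PL y = ?PL y1" unfolding y_def by (simp add: calc PLy2)
    have UCRy2: "UCR y2 = w2 + sc z q2" using y2(2) unfolding q2_def by (simp add: algebra_simps)
    have ULCy1: "ULC y1 = xLC + sc z q1" using y1(2) unfolding q1_def by (simp add: algebra_simps)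
    have Bfy: "Bf y = ?PL y1 + ?PC y1 + ?PVR x + sc z (?PR y2 - ?PVR y2)"
      unfolding Bf_def CRy PLy UCRy2 w2_def q2R by (simp add: algebra_simps)
    have A1: "?PL (Bf y) + ?PC (Bf y) = y1"
    proof -
      have "?PL (Bf y) + ?PC (Bf y) = ?PL y1 + ?PC y1" unfolding Bfy by (simp add: calc)
      then show ?thesis using y1d[symmetric] by simp
    qed
    have A2: "?PR (Bf y) = ?PVR x + sc z (?PR y2 - ?PVR y2)" unfolding Bfy by (simp add: calc)
    have Uy: "U y = xLC + sc z (?PL y1 - ?PVL y1) + ?PVR x + sc z (?PR y2 - ?PVR y2)"
      unfolding Uform Af_def A1 A2 ULCy1 q1L by (simp add: algebra_simps)
    have yP: "y - proj ip ?V y = (?PL y1 - ?PVL y1) + (?PR y2 - ?PVR y2)"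
    proof -
      have y2e: "y2 - ?PC y2 = ?PR y2"
        using arg_cong[OF y2d, of "\<lambda>t. t - ?PC y2"] by simp
      have "y - proj ip ?V y = (?PL y1 - ?PVL y1) + ((y2 - ?PC y2) - ?PVR y2)"
        unfolding Pvy by (simp add: y_def algebra_simps)
      then show ?thesis unfolding y2e .
    qed
    have eq: "U y - sc z (y - proj ip ?V y) = x"
      unfolding Uy yP sc_addr xLC_def by (subst (3) xdec) (simp add: algebra_simps)
    have "schur sc ip U UNIV ?V z x = proj ip ?V y"
    proof -
      have UdB: "\<forall>a\<in>UNIV. \<forall>b\<in>UNIV. U (a - b) = U a - U b" using Ud by simp
      have UnB: "\<forall>a\<in>UNIV. norm (U a) = norm a" using Un by simp
      show ?thesis by (rule schur_eq[OF cs_UNIV hV UdB UnB z UNIV_I eq])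
    qed
    then show "schur sc ip U UNIV ?V z x =
              (let w = schur sc ip ULC ?K1 ?S1 z (proj ip ?S1 x) + ?PVR x
               in ?PVL w + schur sc ip UCR ?K2 ?S2 z (proj ip ?S2 w))"
      unfolding RHS Pvy .
  qed
qed
end



theorem theorem2p5:
  fixes sc :: "complex \<Rightarrow> 'a::{real_normed_vector,banach} \<Rightarrow> 'a"
    and ip :: "'a \<Rightarrow> 'a \<Rightarrow> complex"
    and HL HC HR VL VR :: "'a set"
    and U ULC UCR :: "'a \<Rightarrow> 'a"
  assumes hilb: "complex_hilbert sc ip"
    and cL: "closed_csubspace sc HL" and cC: "closed_csubspace sc HC" and cR: "closed_csubspace sc HR"
    and oLC: "orth ip HL HC" and oCR: "orth ip HC HR" and oLR: "orth ip HL HR"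
    and decomp: "ssum (ssum HL HC) HR = UNIV"
    and uLC: "unitary_on sc ip (ssum HL HC) ULC"
    and uCR: "unitary_on sc ip (ssum HC HR) UCR"
    and U_def: "\<forall>x. U x =
         (let y = proj ip HL x + UCR (proj ip (ssum HC HR) x)
          in ULC (proj ip (ssum HL HC) y) + proj ip HR y)"
    and cVL: "closed_csubspace sc VL" and VL_sub: "VL \<subseteq> HL"
    and cVR: "closed_csubspace sc VR" and VR_sub: "VR \<subseteq> HR"
  shows "(\<forall>z. cmod z < 1 \<longrightarrow> (\<forall>x \<in> ssum (ssum VL HC) VR.
            schur sc ip U UNIV (ssum (ssum VL HC) VR) z x =
              (let w = schur sc ip ULC (ssum HL HC) (ssum VL HC) z (proj ip (ssum VL HC) x)
                       + proj ip VR x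
               in proj ip VL w
                  + schur sc ip UCR (ssum HC HR) (ssum HC VR) z (proj ip (ssum HC VR) w))))
       \<and> (\<forall>z. cmod z < 1 \<longrightarrow> (\<forall>x \<in> HC.
            schur sc ip U UNIV HC z x =
              schur sc ip UCR (ssum HC HR) HC z (schur sc ip ULC (ssum HL HC) HC z x)))"
proof -
  interpret CH sc ip using hilb by unfold_locales
  have hL: "hasproj HL" and hC: "hasproj HC" and hR: "hasproj HR" and hVL: "hasproj VL" and hVR: "hasproj VR"
    using closed_hasproj cL cC cR cVL cVR by auto
  have part1: "\<forall>z. cmod z < 1 \<longrightarrow> (\<forall>x \<in> ssum (ssum VL HC) VR.
            schur sc ip U UNIV (ssum (ssum VL HC) VR) z x =
              (let w = schur sc ip ULC (ssum HL HC) (ssum VL HC) z (proj ip (ssum VL HC) x)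
                       + proj ip VR x
               in proj ip VL w
                  + schur sc ip UCR (ssum HC HR) (ssum HC VR) z (proj ip (ssum HC VR) w)))"
    by (rule core[OF hL hC hR hVL hVR oLC oCR oLR decomp uLC uCR U_def VL_sub VR_sub])
  have cCs: "cs HC" using hasproj_cs[OF hC] .
  have z0L: "{0} \<subseteq> HL" and z0R: "{0} \<subseteq> HR" using cs_0 hasproj_cs hL hR by auto
  have c0: "\<forall>z. cmod z < 1 \<longrightarrow> (\<forall>x \<in> ssum (ssum {0} HC) {0}.
            schur sc ip U UNIV (ssum (ssum {0} HC) {0}) z x =
              (let w = schur sc ip ULC (ssum HL HC) (ssum {0} HC) z (proj ip (ssum {0} HC) x)
                       + proj ip {0} x
               in proj ip {0} w
                  + schur sc ip UCR (ssum HC HR) (ssum HC {0}) z (proj ip (ssum HC {0}) w)))"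
    by (rule core[OF hL hC hR hasproj_zero hasproj_zero oLC oCR oLR decomp uLC uCR U_def z0L z0R])
  have part2: "\<forall>z. cmod z < 1 \<longrightarrow> (\<forall>x \<in> HC.
            schur sc ip U UNIV HC z x =
              schur sc ip UCR (ssum HC HR) HC z (schur sc ip ULC (ssum HL HC) HC z x))"
  proof (intro allI impI ballI)
    fix z x assume z: "cmod z < 1" and x: "x \<in> HC"
    have e: "schur sc ip U UNIV HC z x =
              (let w = schur sc ip ULC (ssum HL HC) HC z (proj ip HC x) + proj ip {0} x
               in proj ip {0} w + schur sc ip UCR (ssum HC HR) HC z (proj ip HC w))"
      using c0 z x unfolding ssum_zero_l[OF cCs] ssum_zero_r[OF cCs] by blast
    have w: "proj ip HC (schur sc ip ULC (ssum HL HC) HC z x) = schur sc ip ULC (ssum HL HC) HC z x"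
      using proj_id[OF cCs schur_in[OF hC]] .
    show "schur sc ip U UNIV HC z x =
              schur sc ip UCR (ssum HC HR) HC z (schur sc ip ULC (ssum HL HC) HC z x)"
      using e unfolding Let_def proj_zero_set proj_id[OF cCs x] by (simp add: w)
  qed
  show ?thesis using part1 part2 by blast
qed


end
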